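(* Let $H$ be a digraph (possibly with loops) and let $D$ be an $H$-colored semicomplete digraph in which every directed $3$-cycle is an $H$-cycle. If $k \geq 2$, then $D$ has a $(k,H)$-kernel.
   Context: All digraphs are finite. A digraph is semicomplete if every two distinct vertices are joined by at least one arc. $D$ has no loops and comes with a map $\rho: A(D)\to V(H)$. For a walk $W=(x_0,\ldots,x_n)$ in $D$, there is an obstruction on $x_i$ if $(\rho(x_{i-1},x_i),\rho(x_i,x_{i+1})) \notin A(H)$; for an open walk this is considered at internal vertices $x_i$, $1\le i\le n-1$, for a closed walk at all $i\in\{0,\ldots,n-1\}$ with indices modulo $n$. $O_H(W)$ is the set of indices with an obstruction; the $H$-length is $l_H(W)=|O_H(W)|+1$ for open $W$ and $|O_H(W)|$ for closed $W$. An $H$-cycle is a directed cycle with no obstructions (the consecutive colours of its arcs, cyclically, form a closed walk in $H$). A $(k,H)$-kernel ($k\ge2$) is a set $S\subseteq V(D)$ such that for every two distinct $u,v\in S$ every directed $uv$-path in $D$ has $H$-length at least $k$, and for every $x\in V(D)\setminus S$ there is a directed path from $x$ to a vertex of $S$ of $H$-length at most $k-1$. *)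

theory Defs
  imports Main
begin

definition digraph :: "'a set \<Rightarrow> ('a \<times> 'a) set \<Rightarrow> bool" where
  "digraph V A \<longleftrightarrow> finite V \<and> A \<subseteq> V \<times> V"

definition loopless :: "('a \<times> 'a) set \<Rightarrow> bool" where
  "loopless A \<longleftrightarrow> (\<forall>x. (x, x) \<notin> A)"

definition H_colouring :: "('a \<times> 'a) set \<Rightarrow> 'c set \<Rightarrow> ('a \<times> 'a \<Rightarrow> 'c) \<Rightarrow> bool" where
  "H_colouring AD VH rho \<longleftrightarrow> (\<forall>e\<in>AD. rho e \<in> VH)"

definition semicomplete :: "'a set \<Rightarrow> ('a \<times> 'a) set \<Rightarrow> bool" where
  "semicomplete V A \<longleftrightarrow> (\<forall>u\<in>V. \<forall>v\<in>V. u \<noteq> v \<longrightarrow> (u, v) \<in> A \<or> (v, u) \<in> A)"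

definition dpath :: "('a \<times> 'a) set \<Rightarrow> 'a list \<Rightarrow> bool" where
  "dpath A p \<longleftrightarrow> p \<noteq> [] \<and> distinct p \<and> (\<forall>i. Suc i < length p \<longrightarrow> (p ! i, p ! Suc i) \<in> A)"

definition obstr_open :: "('a \<times> 'a \<Rightarrow> 'c) \<Rightarrow> ('c \<times> 'c) set \<Rightarrow> 'a list \<Rightarrow> nat \<Rightarrow> bool" where
  "obstr_open rho AH p i \<longleftrightarrow>
     (rho (p ! (i - 1), p ! i), rho (p ! i, p ! (i + 1))) \<notin> AH"

definition H_length :: "('a \<times> 'a \<Rightarrow> 'c) \<Rightarrow> ('c \<times> 'c) set \<Rightarrow> 'a list \<Rightarrow> nat" where
  "H_length rho AH p = card {i. 1 \<le> i \<and> i + 1 < length p \<and> obstr_open rho AH p i} + 1"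

definition dcycle :: "('a \<times> 'a) set \<Rightarrow> 'a list \<Rightarrow> bool" where
  "dcycle A c \<longleftrightarrow> length c \<ge> 2 \<and> distinct c \<and>
     (\<forall>i < length c. (c ! i, c ! ((i + 1) mod length c)) \<in> A)"

definition obstr_closed :: "('a \<times> 'a \<Rightarrow> 'c) \<Rightarrow> ('c \<times> 'c) set \<Rightarrow> 'a list \<Rightarrow> nat \<Rightarrow> bool" where
  "obstr_closed rho AH c i \<longleftrightarrow>
     (let n = length c in
       (rho (c ! ((i + n - 1) mod n), c ! i), rho (c ! i, c ! ((i + 1) mod n))) \<notin> AH)"

definition H_cycle :: "('a \<times> 'a) set \<Rightarrow> ('a \<times> 'a \<Rightarrow> 'c) \<Rightarrow> ('c \<times> 'c) set \<Rightarrow> 'a list \<Rightarrow> bool" where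
  "H_cycle AD rho AH c \<longleftrightarrow> dcycle AD c \<and> (\<forall>i < length c. \<not> obstr_closed rho AH c i)"

definition kH_kernel :: "'a set \<Rightarrow> ('a \<times> 'a) set \<Rightarrow> ('a \<times> 'a \<Rightarrow> 'c) \<Rightarrow> ('c \<times> 'c) set
    \<Rightarrow> nat \<Rightarrow> 'a set \<Rightarrow> bool" where
  "kH_kernel VD AD rho AH k S \<longleftrightarrow> S \<subseteq> VD \<and>
     (\<forall>u\<in>S. \<forall>v\<in>S. u \<noteq> v \<longrightarrow>
        (\<forall>p. dpath AD p \<and> hd p = u \<and> last p = v \<longrightarrow> H_length rho AH p \<ge> k)) \<and>
     (\<forall>x\<in>VD - S. \<exists>p. dpath AD p \<and> hd p = x \<and> last p \<in> S \<and> H_length rho AH p \<le> k - 1)"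

end

theory Submission
  imports Defs
begin

definition hpath :: "('a \<times> 'a) set \<Rightarrow> ('a \<times> 'a \<Rightarrow> 'c) \<Rightarrow> ('c \<times> 'c) set \<Rightarrow> 'a list \<Rightarrow> bool" where
  "hpath A rho AH p \<longleftrightarrow> dpath A p \<and> (\<forall>i. 1 \<le> i \<longrightarrow> i + 1 < length p \<longrightarrow> \<not> obstr_open rho AH p i)"

lemma dpath_single: "dpath A [x]"
  unfolding dpath_def by simp

lemma hpath_single: "hpath A rho AH [x]"
  unfolding hpath_def by (simp add: dpath_single)

lemma dpath_Cons:
  assumes "p \<noteq> []"
  shows "dpath A (z#p) \<longleftrightarrow> z \<notin> set p \<and> (z, hd p) \<in> A \<and> dpath A p"
proof
  assume h: "dpath A (z#p)"
  have a: "\<forall>i. Suc i < Suc (length p) \<longrightarrow> ((z#p) ! i, (z#p) ! Suc i) \<in> A"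
    using h unfolding dpath_def by simp
  have "(z, hd p) \<in> A" using a[rule_format, of 0] assms by (simp add: hd_conv_nth)
  moreover have "\<forall>i. Suc i < length p \<longrightarrow> (p ! i, p ! Suc i) \<in> A"
    using a by (metis Suc_less_eq nth_Cons_Suc)
  ultimately show "z \<notin> set p \<and> (z, hd p) \<in> A \<and> dpath A p"
    using h assms unfolding dpath_def by simp
next
  assume h: "z \<notin> set p \<and> (z, hd p) \<in> A \<and> dpath A p"
  have "\<forall>i. Suc i < length (z#p) \<longrightarrow> ((z#p) ! i, (z#p) ! Suc i) \<in> A"
  proof (intro allI impI)
    fix i assume i: "Suc i < length (z#p)"
    show "((z#p) ! i, (z#p) ! Suc i) \<in> A"
    proof (cases i)
      case 0 then show ?thesis using h assms by (simp add: hd_conv_nth)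
    next
      case (Suc j) then show ?thesis using h i unfolding dpath_def by simp
    qed
  qed
  then show "dpath A (z#p)" using h unfolding dpath_def by simp
qed

lemma obstr_Cons: "1 \<le> i \<Longrightarrow> obstr_open rho AH (x # p) (Suc i) = obstr_open rho AH p i"
  unfolding obstr_open_def by (cases i) auto

lemma hpath_tl: assumes "hpath A rho AH (a # p)" "p \<noteq> []" shows "hpath A rho AH p"
proof -
  have "dpath A p" using assms dpath_Cons unfolding hpath_def by metis
  moreover have "\<forall>i. 1 \<le> i \<longrightarrow> i + 1 < length p \<longrightarrow> \<not> obstr_open rho AH p i"
  proof (intro allI impI)
    fix i assume "1 \<le> i" "i + 1 < length p"
    then have "\<not> obstr_open rho AH (a#p) (Suc i)" using assms(1) unfolding hpath_def by auto
    then show "\<not> obstr_open rho AH p i" using obstr_Cons \<open>1 \<le> i\<close> by metis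
  qed
  ultimately show ?thesis unfolding hpath_def by simp
qed

lemma hpath_Cons:
  assumes "hpath A rho AH (a # b # r)" "(z, a) \<in> A" "z \<notin> set (a # b # r)"
    "(rho (z, a), rho (a, b)) \<in> AH"
  shows "hpath A rho AH (z # a # b # r)"
proof -
  have "dpath A (z # a # b # r)" using assms dpath_Cons[of "a#b#r" A z] unfolding hpath_def by simp
  moreover have "\<forall>i. 1 \<le> i \<longrightarrow> i + 1 < length (z # a # b # r) \<longrightarrow> \<not> obstr_open rho AH (z # a # b # r) i"
  proof (intro allI impI)
    fix i assume i: "1 \<le> i" "i + 1 < length (z # a # b # r)"
    show "\<not> obstr_open rho AH (z # a # b # r) i"
    proof (cases "i = 1")
      case True then show ?thesis using assms(4) unfolding obstr_open_def by simp
    next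
      case False
      then obtain j where j: "i = Suc j" "1 \<le> j" using i by (cases i) auto
      then have "\<not> obstr_open rho AH (a # b # r) j" using assms(1) i unfolding hpath_def by auto
      then show ?thesis using obstr_Cons j by metis
    qed
  qed
  ultimately show ?thesis unfolding hpath_def by simp
qed

lemma hpath_two: "(y, z) \<in> A \<Longrightarrow> y \<noteq> z \<Longrightarrow> hpath A rho AH [y, z]"
  unfolding hpath_def using dpath_Cons[of "[z]" A y] dpath_single[of A z] by auto

lemma hpath_ne: "hpath A rho AH p \<Longrightarrow> p \<noteq> []"
  unfolding hpath_def dpath_def by simp

lemma key:
  assumes sc: "semicomplete VD AD" and ll: "loopless AD"
    and cyc: "\<And>c. dcycle AD c \<Longrightarrow> length c = 3 \<Longrightarrow> H_cycle AD rho AH c"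
  shows "hpath AD rho AH P \<Longrightarrow> set P \<subseteq> VD \<Longrightarrow> z \<in> VD \<Longrightarrow> z \<notin> set P \<Longrightarrow>
     (\<exists>q. hpath AD rho AH q \<and> hd q = z \<and> last q = last P \<and> set q \<subseteq> insert z (set P)) \<or> (hd P, z) \<in> AD"
proof (induction P)
  case Nil then show ?case using hpath_ne by blast
next
  case (Cons a P')
  show ?case
  proof (cases "P' = []")
    case True
    show ?thesis
    proof (cases "(z, a) \<in> AD")
      case True
      then have "hpath AD rho AH [z, a]" using hpath_two Cons.prems by fastforce
      then show ?thesis using \<open>P' = []\<close> by (intro disjI1 exI[of _ "[z,a]"]) auto
    next
      case False
      then show ?thesis using sc Cons.prems unfolding semicomplete_def by auto
    qed
  next
    case False
    then obtain b r where P': "P' = b # r" by (cases P') auto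
    have hP': "hpath AD rho AH P'" by (rule hpath_tl[OF Cons.prems(1) False])
    have IH: "(\<exists>q. hpath AD rho AH q \<and> hd q = z \<and> last q = last P' \<and> set q \<subseteq> insert z (set P')) \<or> (hd P', z) \<in> AD"
      using Cons.IH[OF hP'] Cons.prems by auto
    show ?thesis
    proof (cases "\<exists>q. hpath AD rho AH q \<and> hd q = z \<and> last q = last P' \<and> set q \<subseteq> insert z (set P')")
      case True
      then obtain q where "hpath AD rho AH q \<and> hd q = z \<and> last q = last P' \<and> set q \<subseteq> insert z (set P')" by blast
      then show ?thesis using False by (intro disjI1 exI[of _ q]) auto
    next
      case nq: False
      then have bz: "(b, z) \<in> AD" using IH P' by auto
      show ?thesis
      proof (cases "(z, a) \<in> AD")
        case za: True
        have dpa: "dpath AD (a # b # r)" using Cons.prems(1) P' unfolding hpath_def by simp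
        then have ab: "(a, b) \<in> AD" and anb: "a \<notin> set (b # r)"
          using dpath_Cons[of "b#r" AD a] by auto
        have dst: "distinct [z, a, b]" using Cons.prems(4) P' anb by auto
        have dc: "dcycle AD [z, a, b]"
          unfolding dcycle_def
        proof (intro conjI allI impI)
          fix i assume "i < length [z, a, b]"
          then have "i = 0 \<or> i = 1 \<or> i = 2" by auto
          then show "([z, a, b] ! i, [z, a, b] ! ((i + 1) mod length [z, a, b])) \<in> AD"
            using za ab bz by auto
        next show "2 \<le> length [z,a,b]" by simp
        next show "distinct [z,a,b]" by (fact dst)
        qed
        then have "H_cycle AD rho AH [z, a, b]" using cyc by simp
        then have "\<not> obstr_closed rho AH [z, a, b] 1" unfolding H_cycle_def by simp
        then have "(rho (z, a), rho (a, b)) \<in> AH" unfolding obstr_closed_def by simp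
        then have "hpath AD rho AH (z # a # b # r)"
          using hpath_Cons[of AD rho AH a b r z] Cons.prems P' za by simp
        then show ?thesis using P' by (intro disjI1 exI[of _ "z # a # b # r"]) auto
      next
        case False
        then show ?thesis using sc Cons.prems unfolding semicomplete_def by auto
      qed
    qed
  qed
qed

lemma absorb:
  assumes sc: "semicomplete VD AD" and ll: "loopless AD"
    and cyc: "\<And>c. dcycle AD c \<Longrightarrow> length c = 3 \<Longrightarrow> H_cycle AD rho AH c"
  shows "finite W \<Longrightarrow> W \<subseteq> VD \<Longrightarrow> W \<noteq> {} \<Longrightarrow>
    \<exists>v\<in>W. \<forall>y\<in>W. \<exists>p. hpath AD rho AH p \<and> hd p = y \<and> last p = v \<and> set p \<subseteq> W"
proof (induction W rule: finite_induct)
  case empty then show ?case by simp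
next
  case (insert z W)
  show ?case
  proof (cases "W = {}")
    case True
    then show ?thesis using hpath_single by (intro bexI[of _ z]) (auto intro!: exI[of _ "[z]"])
  next
    case False
    then obtain v where v: "v \<in> W" and
      pv: "\<forall>y\<in>W. \<exists>p. hpath AD rho AH p \<and> hd p = y \<and> last p = v \<and> set p \<subseteq> W"
      using insert by auto
    show ?thesis
    proof (cases "\<exists>q. hpath AD rho AH q \<and> hd q = z \<and> last q = v \<and> set q \<subseteq> insert z W")
      case True
      then obtain q where q: "hpath AD rho AH q \<and> hd q = z \<and> last q = v \<and> set q \<subseteq> insert z W" by blast
      show ?thesis
      proof (intro bexI[of _ v] ballI)
        fix y assume "y \<in> insert z W"
        then show "\<exists>p. hpath AD rho AH p \<and> hd p = y \<and> last p = v \<and> set p \<subseteq> insert z W"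
          using q pv by blast
      qed (use v in auto)
    next
      case nq: False
      have arc: "(y, z) \<in> AD" if y: "y \<in> W" for y
      proof -
        obtain p where p: "hpath AD rho AH p" "hd p = y" "last p = v" "set p \<subseteq> W" using pv y by blast
        have "z \<notin> set p" using p insert.hyps by auto
        have sp: "set p \<subseteq> VD" using p(4) insert.prems by auto
        have zV: "z \<in> VD" using insert.prems by auto
        have "(\<exists>q. hpath AD rho AH q \<and> hd q = z \<and> last q = last p \<and> set q \<subseteq> insert z (set p)) \<or> (hd p, z) \<in> AD"
          using key[OF sc ll cyc p(1) sp zV \<open>z \<notin> set p\<close>] .
        moreover have "\<not> (\<exists>q. hpath AD rho AH q \<and> hd q = z \<and> last q = last p \<and> set q \<subseteq> insert z (set p))"
        proof
          assume "\<exists>q. hpath AD rho AH q \<and> hd q = z \<and> last q = last p \<and> set q \<subseteq> insert z (set p)"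
          then obtain q where q: "hpath AD rho AH q" "hd q = z" "last q = last p" "set q \<subseteq> insert z (set p)" by blast
          have "set q \<subseteq> insert z W" using q(4) p(4) by auto
          then show False using nq q p(3) by auto
        qed
        ultimately show ?thesis using p(2) by auto
      qed
      show ?thesis
      proof (intro bexI[of _ z] ballI)
        fix y assume "y \<in> insert z W"
        then show "\<exists>p. hpath AD rho AH p \<and> hd p = y \<and> last p = z \<and> set p \<subseteq> insert z W"
        proof
          assume "y = z" then show ?thesis using hpath_single by (intro exI[of _ "[z]"]) auto
        next
          assume "y \<in> W"
          then have "hpath AD rho AH [y, z]" using hpath_two arc insert.hyps by fastforce
          then show ?thesis using \<open>y \<in> W\<close> by (intro exI[of _ "[y,z]"]) auto
        qed
      qed simp
    qed
  qed
qed

theorem theorem7: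
  fixes VD :: "'a set" and AD :: "('a \<times> 'a) set"
    and VH :: "'c set" and AH :: "('c \<times> 'c) set"
    and rho :: "'a \<times> 'a \<Rightarrow> 'c" and k :: nat
  assumes "digraph VD AD" and "loopless AD"
    and "digraph VH AH"
    and "H_colouring AD VH rho"
    and "semicomplete VD AD"
    and "\<And>c. dcycle AD c \<Longrightarrow> length c = 3 \<Longrightarrow> H_cycle AD rho AH c"
    and "k \<ge> 2"
  shows "\<exists>S. kH_kernel VD AD rho AH k S"
proof (cases "VD = {}")
  case True
  then show ?thesis unfolding kH_kernel_def by auto
next
  case False
  have fin: "finite VD" using assms(1) unfolding digraph_def by simp
  obtain v where v: "v \<in> VD" and
    pv: "\<forall>y\<in>VD. \<exists>p. hpath AD rho AH p \<and> hd p = y \<and> last p = v \<and> set p \<subseteq> VD"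
    using absorb[OF assms(5) assms(2) assms(6) fin order.refl False] by blast
  have "kH_kernel VD AD rho AH k {v}"
    unfolding kH_kernel_def
  proof (intro conjI ballI)
    fix x assume "x \<in> VD - {v}"
    then obtain p where p: "hpath AD rho AH p" "hd p = x" "last p = v" using pv by blast
    have e: "{i. 1 \<le> i \<and> i + 1 < length p \<and> obstr_open rho AH p i} = {}" 
    proof -
      have "\<forall>i. 1 \<le> i \<longrightarrow> i + 1 < length p \<longrightarrow> \<not> obstr_open rho AH p i" using p(1) unfolding hpath_def by simp
      then show ?thesis by auto
    qed
    have "H_length rho AH p = 1" unfolding H_length_def e by simp
    then show "\<exists>p. dpath AD p \<and> hd p = x \<and> last p \<in> {v} \<and> H_length rho AH p \<le> k - 1"
      using p assms(7) unfolding hpath_def by (intro exI[of _ p]) auto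
  qed (use v in auto)
  then show ?thesis by blast
qed

end
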